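(* Let $q>2$ be a prime power, $m\ge1$, $n=q^m-1=r_1r_2$ with $r_1,r_2>1$, $\gcd(r_1,r_2)=1$ and $r_1=q^a-1$ for some natural number $a$. Let $T=(T_1,T_2):\mathbb{Z}_n\to\mathbb{Z}_{r_1}\times\mathbb{Z}_{r_2}$ be a group isomorphism, let $D^*=\Omega(1)\cup B_1\cup B_2\subseteq\mathbb{Z}_n$ where $\Omega(1)=\{q^i\mid 0\le i<m\}$, $B_1=\{2q^i\mid0\le i<m\}$, $B_2=\{q^i+q^j\mid 0\le i<j<m\}$, let $\overline{D^*}$ be a suitable set of representatives of $D^*$ with $1,2\in\overline{D^*}$, and let $\mathcal{U}$ be a complete set of representatives of the $\sim$-classes of $\overline{D^*}$ with $1,2\in\mathcal{U}$. Then $$|\mathcal{U}|=2+\left|\{C_{r_1}(T_1(e))\mid e\in\mathcal{U}\cap B_2\}\right|=2+\left\lfloor a/2\right\rfloor.$$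
   Context: For integers $x,r$, $C_r(x)=\{xq^i\bmod r\mid i\in\mathbb{N}\}$ is the $q$-cyclotomic coset of $x$ modulo $r$. The $q$-orbit of $(x_1,x_2)\in\mathbb{Z}_{r_1}\times\mathbb{Z}_{r_2}$ is $\{(x_1q^i,x_2q^i)\mid i\in\mathbb{N}\}$. If $D\subseteq\mathbb{Z}_{r_1}\times\mathbb{Z}_{r_2}$ is a union of $q$-orbits, a complete set of representatives $\overline{D}$ of its $q$-orbits is a set of restricted representatives if its projection onto $\mathbb{Z}_{r_1}$ is a complete set of representatives of the $q$-cyclotomic cosets modulo $r_1$ contained in the projection of $D$ onto $\mathbb{Z}_{r_1}$. A complete set of representatives $\overline{D^*}\subseteq D^*$ of the $q$-cyclotomic cosets modulo $n$ in $D^*$ is suitable if $T(\overline{D^*})$ is a set of restricted representatives of the $q$-orbits in $T(D^* )$. On $\overline{D^*}$, $x\sim y$ iff $x\equiv y\pmod{r_1}$. *)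

theory Defs
  imports "HOL-Computational_Algebra.Primes"
begin

text \<open>Elements of Z_r are represented by natural numbers in {0..<r}.\<close>

definition cyc :: "nat \<Rightarrow> nat \<Rightarrow> nat \<Rightarrow> nat set" where
  "cyc q r x = {x * q ^ i mod r | i. True}"

definition qorbit :: "nat \<Rightarrow> nat \<Rightarrow> nat \<Rightarrow> nat \<times> nat \<Rightarrow> (nat \<times> nat) set" where
  "qorbit q r1 r2 x = {(fst x * q ^ i mod r1, snd x * q ^ i mod r2) | i. True}"

definition complete_reps :: "('a \<Rightarrow> 'a set) \<Rightarrow> 'a set \<Rightarrow> 'a set \<Rightarrow> bool" where
  "complete_reps cls D R \<longleftrightarrow> R \<subseteq> D \<and> (\<forall>x\<in>D. \<exists>!y. y \<in> R \<and> x \<in> cls y)"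

definition restricted_reps :: "nat \<Rightarrow> nat \<Rightarrow> nat \<Rightarrow> (nat \<times> nat) set \<Rightarrow> (nat \<times> nat) set \<Rightarrow> bool" where
  "restricted_reps q r1 r2 D R \<longleftrightarrow>
     complete_reps (qorbit q r1 r2) D R \<and> complete_reps (cyc q r1) (fst ` D) (fst ` R)"

definition suitable :: "nat \<Rightarrow> nat \<Rightarrow> nat \<Rightarrow> nat \<Rightarrow> (nat \<Rightarrow> nat \<times> nat) \<Rightarrow> nat set \<Rightarrow> nat set \<Rightarrow> bool" where
  "suitable q n r1 r2 T Dstar Dbar \<longleftrightarrow>
     complete_reps (cyc q n) Dstar Dbar \<and> restricted_reps q r1 r2 (T ` Dstar) (T ` Dbar)"

definition zn_iso :: "nat \<Rightarrow> nat \<Rightarrow> nat \<Rightarrow> (nat \<Rightarrow> nat \<times> nat) \<Rightarrow> bool" where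
  "zn_iso n r1 r2 T \<longleftrightarrow>
     bij_betw T {0..<n} ({0..<r1} \<times> {0..<r2}) \<and>
     (\<forall>x<n. \<forall>y<n. T ((x + y) mod n) =
        ((fst (T x) + fst (T y)) mod r1, (snd (T x) + snd (T y)) mod r2))"

definition Omega1 :: "nat \<Rightarrow> nat \<Rightarrow> nat set" where
  "Omega1 q m = {q ^ i mod (q ^ m - 1) | i. i < m}"

definition B1 :: "nat \<Rightarrow> nat \<Rightarrow> nat set" where
  "B1 q m = {2 * q ^ i mod (q ^ m - 1) | i. i < m}"

definition B2 :: "nat \<Rightarrow> nat \<Rightarrow> nat set" where
  "B2 q m = {(q ^ i + q ^ j) mod (q ^ m - 1) | i j. i < j \<and> j < m}"

definition Dstar :: "nat \<Rightarrow> nat \<Rightarrow> nat set" where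
  "Dstar q m = Omega1 q m \<union> B1 q m \<union> B2 q m"

end

theory Submission
  imports Defs
begin


lemma cyc_mod: "cyc q r (x mod r) = cyc q r x"
  unfolding cyc_def by (simp add: mod_mult_left_eq)

lemma cyc_self: "x mod r \<in> cyc q r x"
  unfolding cyc_def by (auto intro!: exI[of _ 0])

lemma sum_pow_lt:
  fixes q :: nat
  assumes "q \<ge> 3" "j \<noteq> l" "j < a" "l < a"
  shows "q ^ j + q ^ l < q ^ a - 1"
proof -
  have main: "q ^ j + q ^ l < q ^ a - 1" if "j < l" "l < a" for j l
  proof -
    have a2: "a \<ge> 2" using that by linarith
    define P where "P = q ^ (a - 2)"
    have P1: "P \<ge> 1" unfolding P_def using assms(1) by simp
    have qa: "q ^ a = q * q * P" unfolding P_def using a2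
      by (metis le_add_diff_inverse power_add power2_eq_square)
    have "q ^ j \<le> P" unfolding P_def using that assms(1) by (intro power_increasing) auto
    moreover have "q ^ l \<le> q ^ (Suc (a - 2))" using that assms(1) by (intro power_increasing) auto
    moreover have "q ^ (Suc (a - 2)) = q * P" unfolding P_def by simp
    moreover have "q * q * P \<ge> 3 * q * P" using assms(1) by simp
    moreover have "3 * q * P \<ge> q * P + 6 * P" using assms(1) by (simp add: mult_right_mono)
    ultimately show ?thesis using qa P1 by linarith
  qed
  show ?thesis
  proof (cases "j < l")
    case True thus ?thesis using main assms by blast
  next
    case False hence "l < j" using assms by simp
    thus ?thesis using main[of l j] assms by simp
  qed
qed

lemma one_plus_pow_neq:
  fixes q :: nat assumes "q \<ge> 2" "k \<ge> 1" shows "1 + q ^ k \<noteq> q ^ j"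
proof
  assume h: "1 + q ^ k = q ^ j"
  show False
  proof (cases j)
    case 0 thus ?thesis using h assms by simp
  next
    case (Suc j')
    have "q dvd q ^ k" using assms by (simp add: dvd_power)
    hence "(1 + q ^ k) mod q = 1 mod q" by (metis dvd_imp_mod_0 mod_add_right_eq add_0_right)
    hence "(1 + q ^ k) mod q = 1" using assms by simp
    moreover have "q ^ j mod q = 0" using Suc by simp
    ultimately show ?thesis using h by simp
  qed
qed

lemma digit2:
  fixes q :: nat assumes "q \<ge> 2" "k \<ge> 1" "1 + q ^ k = q ^ j + q ^ l"
  shows "(j = 0 \<and> l = k) \<or> (j = k \<and> l = 0)"
proof -
  have q1: "q > 1" using assms by simp
  have "\<not> (j \<ge> 1 \<and> l \<ge> 1)"
  proof
    assume h: "j \<ge> 1 \<and> l \<ge> 1"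
    have "q dvd q ^ k" using assms by (simp add: dvd_power)
    hence "(1 + q ^ k) mod q = 1 mod q" by (metis dvd_imp_mod_0 mod_add_right_eq add_0_right)
    hence "(1 + q ^ k) mod q = 1" using assms by simp
    moreover have "q dvd (q ^ j + q ^ l)" 
      using h by (simp add: dvd_power)
    ultimately show False using assms by (simp add: dvd_eq_mod_eq_0)
  qed
  hence "j = 0 \<or> l = 0" by auto
  thus ?thesis
  proof
    assume "j = 0" hence "q ^ k = q ^ l" using assms by simp
    thus ?thesis using q1 \<open>j = 0\<close> by (simp add: power_inject_exp)
  next
    assume "l = 0" hence "q ^ k = q ^ j" using assms by simp
    thus ?thesis using q1 \<open>l = 0\<close> by (simp add: power_inject_exp)
  qed
qed


context
  fixes q a :: nat
  assumes q3: "q \<ge> 3" and a1: "a \<ge> 1"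
begin

lemma rr_ge: "q ^ a - 1 \<ge> 2"
proof -
  have "q ^ a \<ge> q ^ 1" using q3 a1 by (intro power_increasing) auto
  thus ?thesis using q3 by simp
qed

lemma qa_mod: "q ^ a mod (q ^ a - 1) = 1"
proof -
  have "q ^ a = (q ^ a - 1) + 1" using rr_ge by simp
  hence "q ^ a mod (q ^ a - 1) = 1 mod (q ^ a - 1)" by (metis mod_add_self1)
  thus ?thesis using rr_ge by simp
qed

lemma qat_mod: "q ^ (a * t) mod (q ^ a - 1) = 1"
proof -
  have "q ^ (a * t) mod (q ^ a - 1) = ((q ^ a) mod (q ^ a - 1)) ^ t mod (q ^ a - 1)"
    by (simp add: power_mult power_mod)
  thus ?thesis using qa_mod rr_ge by simp
qed

lemma pow_lt: "i < a \<Longrightarrow> q ^ i < q ^ a - 1"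
proof -
  assume i: "i < a"
  have "q ^ i \<le> q ^ (a - 1)" using i q3 by (intro power_increasing) auto
  moreover have "q ^ a = q * q ^ (a - 1)" using a1 by (cases a) auto
  moreover have "q ^ (a - 1) \<ge> 1" using q3 by simp
  moreover have "q * q ^ (a - 1) \<ge> 3 * q ^ (a - 1)" using q3 by simp
  ultimately show ?thesis by linarith
qed

lemma pow_mod: "q ^ i mod (q ^ a - 1) = q ^ (i mod a)"
proof -
  have "q ^ i = q ^ (a * (i div a)) * q ^ (i mod a)"
    by (metis div_mult_mod_eq power_add mult.commute)
  hence "q ^ i mod (q ^ a - 1) = ((q ^ (a * (i div a)) mod (q ^ a - 1)) * q ^ (i mod a)) mod (q ^ a - 1)"
    by (simp add: mod_mult_left_eq)
  also have "\<dots> = q ^ (i mod a) mod (q ^ a - 1)" using qat_mod by simp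
  also have "\<dots> = q ^ (i mod a)" using pow_lt a1 by simp
  finally show ?thesis .
qed

lemma C1: assumes "x mod (q ^ a - 1) \<in> cyc q (q ^ a - 1) y"
  shows "cyc q (q ^ a - 1) x = cyc q (q ^ a - 1) y"
proof -
  let ?r = "q ^ a - 1"
  obtain i where i: "x mod ?r = y * q ^ i mod ?r" using assms unfolding cyc_def by auto
  have xs: "x * q ^ s mod ?r = y * q ^ (i + s) mod ?r" for s
  proof -
    have "x * q ^ s mod ?r = (x mod ?r) * q ^ s mod ?r" by (simp add: mod_mult_left_eq)
    also have "\<dots> = (y * q ^ i mod ?r) * q ^ s mod ?r" using i by simp
    also have "\<dots> = y * q ^ (i + s) mod ?r" by (simp add: mod_mult_left_eq power_add mult.assoc)
    finally show ?thesis .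
  qed
  have ys: "y * q ^ (t + a * i) mod ?r = y * q ^ t mod ?r" for t
  proof -
    have "y * q ^ (t + a * i) mod ?r = (y * q ^ t) * (q ^ (a * i)) mod ?r"
      by (simp add: power_add mult.assoc)
    also have "\<dots> = (y * q ^ t) * (q ^ (a * i) mod ?r) mod ?r"
      by (rule mod_mult_right_eq[symmetric])
    finally have "y * q ^ (t + a * i) mod ?r = (y * q ^ t) * (q ^ (a * i) mod ?r) mod ?r" .
    thus ?thesis using qat_mod by simp
  qed
  show ?thesis
  proof
    show "cyc q ?r x \<subseteq> cyc q ?r y" unfolding cyc_def using xs by blast
  next
    show "cyc q ?r y \<subseteq> cyc q ?r x"
    proof
      fix z assume "z \<in> cyc q ?r y"
      then obtain t where t: "z = y * q ^ t mod ?r" unfolding cyc_def by auto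
      have e: "i + (t + (a - 1) * i) = t + a * i" using a1 by (cases a) auto
      have "z = y * q ^ (t + a * i) mod ?r" using t ys by simp
      also have "\<dots> = y * q ^ (i + (t + (a - 1) * i)) mod ?r" by (simp only: e)
      also have "\<dots> = x * q ^ (t + (a - 1) * i) mod ?r" using xs by simp
      finally have "z = x * q ^ (t + (a - 1) * i) mod ?r" .
      thus "z \<in> cyc q ?r x" unfolding cyc_def by blast
    qed
  qed
qed

lemma C2: "cyc q (q ^ a - 1) (q ^ i * z) = cyc q (q ^ a - 1) z"
  by (rule C1) (auto simp: cyc_def mult.commute)

lemma C3: assumes "cyc q (q ^ a - 1) x = cyc q (q ^ a - 1) y"
  shows "\<exists>j<a. x mod (q ^ a - 1) = y * q ^ j mod (q ^ a - 1)"
proof -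
  let ?r = "q ^ a - 1"
  have "x mod ?r \<in> cyc q ?r y" using cyc_self assms by metis
  then obtain i where i: "x mod ?r = y * q ^ i mod ?r" unfolding cyc_def by auto
  also have "\<dots> = y * (q ^ i mod ?r) mod ?r" by (simp add: mod_mult_right_eq)
  also have "\<dots> = y * q ^ (i mod a) mod ?r" using pow_mod by simp
  finally show ?thesis using a1 by (intro exI[of _ "i mod a"]) auto
qed

lemma C4: assumes "(u * w) mod (q ^ a - 1) = 1"
  and "cyc q (q ^ a - 1) (x * u) = cyc q (q ^ a - 1) (y * u)"
  shows "cyc q (q ^ a - 1) x = cyc q (q ^ a - 1) y"
proof -
  let ?r = "q ^ a - 1"
  obtain j where j: "x * u mod ?r = y * u * q ^ j mod ?r" using C3[OF assms(2)] by auto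
  have inv: "z * u * w mod ?r = z mod ?r" for z
  proof -
    have "z * u * w mod ?r = z * ((u * w) mod ?r) mod ?r" by (simp add: mod_mult_right_eq mult.assoc)
    thus ?thesis using assms(1) by simp
  qed
  have "x mod ?r = (x * u mod ?r) * w mod ?r" using inv by (simp add: mod_mult_left_eq)
  also have "\<dots> = (y * u * q ^ j mod ?r) * w mod ?r" using j by simp
  also have "\<dots> = (y * u * q ^ j) * w mod ?r" by (rule mod_mult_left_eq)
  also have "\<dots> = (y * q ^ j) * u * w mod ?r" by (simp add: ac_simps)
  also have "\<dots> = y * q ^ j mod ?r" using inv by simp
  finally have "x mod ?r \<in> cyc q ?r y" unfolding cyc_def by blast
  thus ?thesis by (rule C1)
qed


lemma mulpow: assumes "j < a" "1 \<le> k" "k < a"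
  shows "((1 + q ^ k) * q ^ j) mod (q ^ a - 1) = q ^ j + q ^ ((k + j) mod a)"
    and "j \<noteq> (k + j) mod a"
proof -
  let ?r = "q ^ a - 1"
  have "(1 + q ^ k) * q ^ j = q ^ j + q ^ (k + j)" by (simp add: algebra_simps power_add)
  hence "((1 + q ^ k) * q ^ j) mod ?r = (q ^ j mod ?r + q ^ (k + j) mod ?r) mod ?r"
    by (simp add: mod_add_eq)
  also have "\<dots> = (q ^ j + q ^ ((k + j) mod a)) mod ?r" using pow_mod assms(1) by simp
  finally have e: "((1 + q ^ k) * q ^ j) mod ?r = (q ^ j + q ^ ((k + j) mod a)) mod ?r" .
  show ne: "j \<noteq> (k + j) mod a"
  proof
    assume h: "j = (k + j) mod a"
    show False
    proof (cases "k + j < a")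
      case True thus False using h assms by simp
    next
      case False
      hence "(k + j) mod a = k + j - a" using assms by (simp add: le_mod_geq)
      thus False using h assms by simp
    qed
  qed
  have "q ^ j + q ^ ((k + j) mod a) < ?r"
    using sum_pow_lt[OF q3 ne] assms a1 by simp
  thus "((1 + q ^ k) * q ^ j) mod (q ^ a - 1) = q ^ j + q ^ ((k + j) mod a)" using e by simp
qed

lemma N1: "cyc q (q ^ a - 1) 2 \<noteq> cyc q (q ^ a - 1) 1"
proof
  let ?r = "q ^ a - 1"
  assume "cyc q ?r 2 = cyc q ?r 1"
  then obtain j where j: "j < a" "2 mod ?r = 1 * q ^ j mod ?r" using C3 by blast
  hence e: "2 mod ?r = q ^ j" using pow_lt by simp
  show False
  proof (cases "?r = 2")
    case True thus False using e q3 by simp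
  next
    case False
    hence "2 = q ^ j" using e rr_ge by simp
    moreover have "q ^ j \<noteq> 2"
    proof (cases j)
      case 0 thus ?thesis by simp
    next
      case (Suc j')
      have "q ^ j \<ge> q ^ 1" using Suc q3 by (intro power_increasing) auto
      thus ?thesis using q3 by simp
    qed
    ultimately show False by simp
  qed
qed

lemma N2: assumes "1 \<le> k" "k \<le> a div 2"
  shows "cyc q (q ^ a - 1) (1 + q ^ k) \<noteq> cyc q (q ^ a - 1) 1"
proof
  let ?r = "q ^ a - 1"
  assume "cyc q ?r (1 + q ^ k) = cyc q ?r 1"
  then obtain j where j: "j < a" "(1 + q ^ k) mod ?r = 1 * q ^ j mod ?r" using C3 by blast
  have "q ^ 0 + q ^ k < ?r" using sum_pow_lt[OF q3, of 0 k a] assms by simp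
  hence "1 + q ^ k = q ^ j" using j pow_lt by simp
  thus False using one_plus_pow_neq[of q k j] q3 assms by simp
qed

lemma N3: assumes "1 \<le> k" "k \<le> a div 2"
  shows "cyc q (q ^ a - 1) (1 + q ^ k) \<noteq> cyc q (q ^ a - 1) 2"
proof
  let ?r = "q ^ a - 1"
  assume "cyc q ?r (1 + q ^ k) = cyc q ?r 2"
  hence "cyc q ?r 2 = cyc q ?r (1 + q ^ k)" by simp
  then obtain j where j: "j < a" "2 mod ?r = (1 + q ^ k) * q ^ j mod ?r" using C3 by blast
  have ka: "k < a" using assms by simp
  have "q ^ a \<ge> q ^ 2" using assms q3 by (intro power_increasing) auto
  moreover have "q ^ 2 \<ge> 3 * 3" using mult_le_mono[OF q3 q3] by (simp add: power2_eq_square)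
  ultimately have "?r > 2" by simp
  hence "2 = q ^ j + q ^ ((k + j) mod a)" using j mulpow[OF j(1) assms(1) ka] by simp
  moreover have "q ^ j + q ^ ((k + j) mod a) \<ge> 3"
  proof -
    have "j \<ge> 1 \<or> (k + j) mod a \<ge> 1" using mulpow(2)[OF j(1) assms(1) ka] by auto
    moreover have "x \<ge> 1 \<Longrightarrow> q ^ x \<ge> 3" for x
    proof -
      assume "x \<ge> 1" hence "q ^ x \<ge> q ^ 1" using q3 by (intro power_increasing) auto
      thus ?thesis using q3 by simp
    qed
    moreover have "q ^ x \<ge> 1" for x using q3 by simp
    ultimately show ?thesis by (metis add_le_mono le_add1 le_add2 le_trans)
  qed
  ultimately show False by simp
qed

lemma N4: assumes "1 \<le> k" "k \<le> a div 2" "1 \<le> k'" "k' \<le> a div 2"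
  and "cyc q (q ^ a - 1) (1 + q ^ k) = cyc q (q ^ a - 1) (1 + q ^ k')"
  shows "k = k'"
proof -
  let ?r = "q ^ a - 1"
  obtain j where j: "j < a" "(1 + q ^ k) mod ?r = (1 + q ^ k') * q ^ j mod ?r" using C3[OF assms(5)] by blast
  have ka: "k' < a" using assms by simp
  have "q ^ 0 + q ^ k < ?r" using sum_pow_lt[OF q3, of 0 k a] assms by simp
  hence "1 + q ^ k = q ^ j + q ^ ((k' + j) mod a)" using j mulpow[OF j(1) assms(3) ka] by simp
  hence "(j = 0 \<and> (k' + j) mod a = k) \<or> (j = k \<and> (k' + j) mod a = 0)"
    using digit2[of q k j "(k' + j) mod a"] q3 assms by simp
  thus ?thesis
  proof
    assume "j = 0 \<and> (k' + j) mod a = k" thus ?thesis using ka by (metis add.right_neutral mod_less)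
  next
    assume h: "j = k \<and> (k' + j) mod a = 0"
    have "k' + k \<le> a" using assms by linarith
    moreover have "k' + k \<noteq> a \<Longrightarrow> False"
    proof -
      assume "k' + k \<noteq> a" hence "k' + k < a" using \<open>k' + k \<le> a\<close> by simp
      hence "(k' + k) mod a = k' + k" by (rule mod_less)
      moreover have "(k' + k) mod a = 0" using h by metis
      ultimately show False using assms by simp
    qed
    ultimately have "k' + k = a" by blast
    thus ?thesis using assms by linarith
  qed
qed

lemma modN: assumes "(q ^ a - 1) dvd N"
  shows "cyc q (q ^ a - 1) ((z mod N) * u) = cyc q (q ^ a - 1) (z * u)"
proof -
  let ?r = "q ^ a - 1"
  have "((z mod N) * u) mod ?r = ((z mod N) mod ?r * u) mod ?r" by (simp add: mod_mult_left_eq)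
  also have "\<dots> = (z mod ?r * u) mod ?r" using assms by (simp add: mod_mod_cancel)
  also have "\<dots> = (z * u) mod ?r" by (simp add: mod_mult_left_eq)
  finally show ?thesis by (metis cyc_mod)
qed

abbreviation "SC u \<equiv> {cyc q (q ^ a - 1) u, cyc q (q ^ a - 1) (2 * u)} \<union>
   (\<lambda>k. cyc q (q ^ a - 1) ((1 + q ^ k) * u)) ` {1..a div 2}"

lemma K: "cyc q (q ^ a - 1) ((1 + q ^ d) * u) \<in> SC u"
proof -
  let ?r = "q ^ a - 1"
  define k where "k = d mod a"
  have ka: "k < a" using a1 k_def by simp
  have "(1 + q ^ d) mod ?r = (1 + q ^ d mod ?r) mod ?r" by (metis mod_add_right_eq)
  also have "\<dots> = (1 + q ^ k mod ?r) mod ?r" using pow_mod k_def pow_lt ka by simp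
  also have "\<dots> = (1 + q ^ k) mod ?r" by (metis mod_add_right_eq)
  finally have "((1 + q ^ d) * u) mod ?r = ((1 + q ^ k) * u) mod ?r" by (metis mod_mult_left_eq)
  hence e: "cyc q ?r ((1 + q ^ d) * u) = cyc q ?r ((1 + q ^ k) * u)" by (metis cyc_mod)
  consider "k = 0" | "1 \<le> k \<and> k \<le> a div 2" | "a div 2 < k" by linarith
  thus ?thesis
  proof cases
    case 1 thus ?thesis using e by (simp add: mult_2)
  next
    case 2 thus ?thesis using e by auto
  next
    case 3
    have "cyc q ?r ((1 + q ^ k) * u) = cyc q ?r (q ^ (a - k) * ((1 + q ^ k) * u))" using C2 by simp
    also have "q ^ (a - k) * ((1 + q ^ k) * u) = (q ^ (a - k) + q ^ a) * u"
      using ka by (simp add: algebra_simps power_add[symmetric])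
    also have "cyc q ?r ((q ^ (a - k) + q ^ a) * u) = cyc q ?r ((1 + q ^ (a - k)) * u)"
    proof -
      have "(q ^ (a - k) + q ^ a) mod ?r = (q ^ (a - k) + q ^ a mod ?r) mod ?r" by (metis mod_add_right_eq)
      also have "\<dots> = (1 + q ^ (a - k)) mod ?r" using qa_mod by simp
      finally have "((q ^ (a - k) + q ^ a) * u) mod ?r = ((1 + q ^ (a - k)) * u) mod ?r"
        by (metis mod_mult_left_eq)
      thus ?thesis by (metis cyc_mod)
    qed
    finally show ?thesis using e 3 ka by force
  qed
qed

lemma classD: assumes "(q ^ a - 1) dvd (q ^ m - 1)" "e \<in> Dstar q m"
  shows "cyc q (q ^ a - 1) (e * u) \<in> SC u"
proof -
  let ?r = "q ^ a - 1" and ?n = "q ^ m - 1"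
  have "e \<in> Omega1 q m \<or> e \<in> B1 q m \<or> e \<in> B2 q m" using assms(2) unfolding Dstar_def by auto
  thus ?thesis
  proof (elim disjE)
    assume "e \<in> Omega1 q m"
    then obtain i where "e = q ^ i mod ?n" unfolding Omega1_def by auto
    hence "cyc q ?r (e * u) = cyc q ?r (q ^ i * u)" using modN[OF assms(1)] by simp
    thus ?thesis using C2 by simp
  next
    assume "e \<in> B1 q m"
    then obtain i where "e = 2 * q ^ i mod ?n" unfolding B1_def by auto
    hence "cyc q ?r (e * u) = cyc q ?r (q ^ i * (2 * u))" using modN[OF assms(1)] by (simp add: ac_simps)
    thus ?thesis using C2 by simp
  next
    assume "e \<in> B2 q m"
    then obtain i j where ij: "i < j" "e = (q ^ i + q ^ j) mod ?n" unfolding B2_def by auto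
    have h: "q ^ i + q ^ j = q ^ i * (1 + q ^ (j - i))" using ij by (simp add: algebra_simps power_add[symmetric])
    have eq: "(q ^ i + q ^ j) * u = q ^ i * ((1 + q ^ (j - i)) * u)" by (simp only: h mult.assoc)
    have "cyc q ?r (e * u) = cyc q ?r ((q ^ i + q ^ j) * u)" using modN[OF assms(1)] ij by simp
    hence "cyc q ?r (e * u) = cyc q ?r (q ^ i * ((1 + q ^ (j - i)) * u))" using eq by simp
    thus ?thesis using C2 K by simp
  qed
qed

lemma card_SC: assumes "(u * w) mod (q ^ a - 1) = 1"
  shows "card (SC u) = 2 + a div 2"
proof -
  let ?r = "q ^ a - 1"
  let ?f = "\<lambda>k. cyc q ?r ((1 + q ^ k) * u)"
  have inj: "inj_on ?f {1..a div 2}"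
  proof (rule inj_onI)
    fix k k' assume "k \<in> {1..a div 2}" "k' \<in> {1..a div 2}" and fk: "?f k = ?f k'"
    have "cyc q ?r (1 + q ^ k) = cyc q ?r (1 + q ^ k')" by (rule C4[OF assms]) (use fk in simp)
    thus "k = k'" using N4[of k k'] \<open>k \<in> {1..a div 2}\<close> \<open>k' \<in> {1..a div 2}\<close> by simp
  qed
  have d12: "cyc q ?r u \<noteq> cyc q ?r (2 * u)"
  proof
    assume h: "cyc q ?r u = cyc q ?r (2 * u)"
    have "cyc q ?r 2 = cyc q ?r 1" by (rule C4[OF assms]) (use h in simp)
    thus False using N1 by simp
  qed
  have d1: "cyc q ?r u \<notin> ?f ` {1..a div 2}"
  proof
    assume "cyc q ?r u \<in> ?f ` {1..a div 2}"
    then obtain k where k: "k \<in> {1..a div 2}" "cyc q ?r (1 * u) = ?f k" by auto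
    have "cyc q ?r 1 = cyc q ?r (1 + q ^ k)" by (rule C4[OF assms]) (use k in simp)
    thus False using N2[of k] k(1) by simp
  qed
  have d2: "cyc q ?r (2 * u) \<notin> ?f ` {1..a div 2}"
  proof
    assume "cyc q ?r (2 * u) \<in> ?f ` {1..a div 2}"
    then obtain k where k: "k \<in> {1..a div 2}" "cyc q ?r (2 * u) = ?f k" by auto
    have "cyc q ?r 2 = cyc q ?r (1 + q ^ k)" by (rule C4[OF assms]) (use k in simp)
    thus False using N3[of k] k(1) by simp
  qed
  have "card (?f ` {1..a div 2}) = a div 2" using card_image[OF inj] by simp
  thus ?thesis using d12 d1 d2 by simp
qed

end



lemma complete_reps_inj:
  assumes "complete_reps cls D R" "\<forall>x\<in>D. \<forall>y\<in>D. (x \<in> cls y) = (f x = f y)"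
  shows "inj_on f R" "f ` R = f ` D"
proof -
  have RD: "R \<subseteq> D" and U: "\<forall>x\<in>D. \<exists>!y. y \<in> R \<and> x \<in> cls y"
    using assms(1) unfolding complete_reps_def by auto
  show "inj_on f R"
  proof (rule inj_onI)
    fix x y assume xy: "x \<in> R" "y \<in> R" "f x = f y"
    hence "x \<in> D" "y \<in> D" using RD by auto
    hence "x \<in> cls y" "x \<in> cls x" using assms(2) xy by auto
    thus "x = y" using U \<open>x \<in> D\<close> xy by metis
  qed
  show "f ` R = f ` D"
  proof
    show "f ` R \<subseteq> f ` D" using RD by auto
  next
    show "f ` D \<subseteq> f ` R"
    proof
      fix z assume "z \<in> f ` D"
      then obtain x where x: "x \<in> D" "z = f x" by auto
      then obtain y where y: "y \<in> R" "x \<in> cls y" using U by metis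
      hence "f x = f y" using assms(2) x RD by auto
      thus "z \<in> f ` R" using x y by auto
    qed
  qed
qed

lemma zn_fst:
  assumes "zn_iso n r1 r2 T" "n > 1" "r1 > 1" "r2 > 0"
  shows "\<forall>x<n. fst (T x) = x * fst (T 1) mod r1"
    and "\<exists>w. fst (T 1) * w mod r1 = 1"
    and "\<forall>x<n. fst (T x) < r1"
proof -
  have bij: "bij_betw T {0..<n} ({0..<r1} \<times> {0..<r2})"
    and add: "\<forall>x<n. \<forall>y<n. T ((x + y) mod n) =
        ((fst (T x) + fst (T y)) mod r1, (snd (T x) + snd (T y)) mod r2)"
    using assms(1) unfolding zn_iso_def by auto
  have img: "T ` {0..<n} = {0..<r1} \<times> {0..<r2}" using bij by (simp add: bij_betw_def)
  show lt: "\<forall>x<n. fst (T x) < r1"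
  proof (intro allI impI)
    fix x assume "x < n" hence "T x \<in> T ` {0..<n}" by simp
    hence "T x \<in> {0..<r1} \<times> {0..<r2}" using img by simp
    thus "fst (T x) < r1" by auto
  qed
  let ?u = "fst (T 1)"
  have f0: "fst (T 0) = 0"
  proof -
    have h: "T ((0 + 0) mod n) = ((fst (T 0) + fst (T 0)) mod r1, (snd (T 0) + snd (T 0)) mod r2)"
      using add assms(2) by blast
    have "fst (T ((0 + 0) mod n)) = (fst (T 0) + fst (T 0)) mod r1" by (simp only: h fst_conv)
    moreover have "(0 + 0) mod n = (0::nat)" by simp
    ultimately have e: "fst (T 0) = (fst (T 0) + fst (T 0)) mod r1" by simp
    have l: "fst (T 0) < r1" using lt assms(2) by auto
    show ?thesis
    proof (cases "fst (T 0) + fst (T 0) < r1")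
      case True thus ?thesis using e by simp
    next
      case False
      hence "(fst (T 0) + fst (T 0)) mod r1 = fst (T 0) + fst (T 0) - r1" using l
        by (simp add: le_mod_geq)
      thus ?thesis using e l by simp
    qed
  qed
  show main: "\<forall>x<n. fst (T x) = x * ?u mod r1"
  proof (intro allI impI)
    fix x assume "x < n"
    thus "fst (T x) = x * ?u mod r1"
    proof (induction x)
      case 0 thus ?case using f0 by simp
    next
      case (Suc x)
      have h: "T ((x + 1) mod n) = ((fst (T x) + ?u) mod r1, (snd (T x) + snd (T 1)) mod r2)"
        using add Suc.prems assms(2) by (meson Suc_lessD)
      have "fst (T ((x + 1) mod n)) = (fst (T x) + ?u) mod r1" by (simp only: h fst_conv)
      moreover have "(x + 1) mod n = Suc x" using Suc.prems by simp
      ultimately have "fst (T (Suc x)) = (fst (T x) + ?u) mod r1" by simp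
      also have "\<dots> = (x * ?u mod r1 + ?u) mod r1" using Suc by simp
      also have "\<dots> = (x * ?u + ?u) mod r1" by (rule mod_add_left_eq)
      also have "\<dots> = Suc x * ?u mod r1" by (simp add: add.commute)
      finally show ?case .
    qed
  qed
  have "(1, 0) \<in> T ` {0..<n}" using img assms(3,4) by auto
  then obtain x0 where x0: "x0 < n" "T x0 = (1, 0)" by auto
  have "fst (T x0) = x0 * ?u mod r1" using main x0(1) by blast
  moreover have "fst (T x0) = 1" using x0(2) by simp
  ultimately have "x0 * ?u mod r1 = 1" by simp
  thus "\<exists>w. ?u * w mod r1 = 1" by (metis mult.commute)
qed



theorem mainTheorem5:
  fixes q m n r1 r2 a :: nat and T :: "nat \<Rightarrow> nat \<times> nat" and Dbar U :: "nat set"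
  assumes "\<exists>p k. prime p \<and> k \<ge> 1 \<and> q = p ^ k"
    and "q > 2" and "m \<ge> 1"
    and "n = q ^ m - 1" and "n = r1 * r2" and "r1 > 1" and "r2 > 1" and "coprime r1 r2"
    and "r1 = q ^ a - 1"
    and "zn_iso n r1 r2 T"
    and "suitable q n r1 r2 T (Dstar q m) Dbar" and "1 \<in> Dbar" and "2 \<in> Dbar"
    and "complete_reps (\<lambda>y. {x \<in> Dbar. x mod r1 = y mod r1}) Dbar U"
    and "1 \<in> U" and "2 \<in> U"
  shows "card U = 2 + card ((\<lambda>e. cyc q r1 (fst (T e))) ` (U \<inter> B2 q m))
       \<and> card U = 2 + a div 2"
proof -
  note r1def = assms(9)
  have q3: "q \<ge> 3" using assms(2) by simp
  have a1: "a \<ge> 1"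
  proof (rule ccontr)
    assume "\<not> a \<ge> 1" hence "a = 0" by simp
    thus False using assms(6,9) by simp
  qed
  have n4: "n \<ge> 4" using assms(5,6,7) mult_le_mono[of 2 r1 2 r2] by simp
  have n1: "n > 1" using n4 by simp
  have r1p: "r1 > 0" using assms(6) by simp
  have am: "a < m"
  proof -
    have "r1 < n" using assms(5,6,7) by simp
    hence "q ^ a < q ^ m" using assms(4,9) by simp
    thus ?thesis using q3 by (simp add: power_less_imp_less_exp)
  qed
  have dvdn: "r1 dvd n" using assms(5) by simp
  have dvdn': "(q ^ a - 1) dvd (q ^ m - 1)" using dvdn assms(4,9) by simp
  define Ds where "Ds = Dstar q m"
  have Dsn: "x < n" if "x \<in> Ds" for x
    using that n1 unfolding Ds_def Dstar_def Omega1_def B1_def B2_def assms(4)[symmetric] by auto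
  define u where "u = fst (T 1)"
  have T1: "\<forall>x<n. fst (T x) = x * u mod r1" using zn_fst(1)[OF assms(10) n1 assms(6)] assms(7) u_def by simp
  obtain w where w: "u * w mod r1 = 1" using zn_fst(2)[OF assms(10) n1 assms(6)] assms(7) u_def by auto
  have CRn: "complete_reps (cyc q n) Ds Dbar"
    and CR1: "complete_reps (cyc q r1) (fst ` T ` Ds) (fst ` T ` Dbar)"
    using assms(11) unfolding suitable_def restricted_reps_def Ds_def by (auto simp: image_image)
  have DbarDs: "Dbar \<subseteq> Ds" using CRn unfolding complete_reps_def by auto
  have UD: "U \<subseteq> Dbar" using assms(14) unfolding complete_reps_def by auto
  have CRU: "\<forall>x\<in>Dbar. \<exists>!y. y \<in> U \<and> x \<in> {z \<in> Dbar. z mod r1 = y mod r1}"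
    using assms(14) unfolding complete_reps_def by auto
  let ?Cl = "cyc q r1"
  note C1' = C1[OF q3 a1, folded r1def]
  have D'lt: "x < r1" if "x \<in> fst ` T ` Ds" for x
    using that T1 Dsn r1p by auto
  have iff: "\<forall>x\<in>fst ` T ` Ds. \<forall>y\<in>fst ` T ` Ds. (x \<in> ?Cl y) = (?Cl x = ?Cl y)"
  proof (intro ballI iffI)
    fix x y assume "x \<in> fst ` T ` Ds" "y \<in> fst ` T ` Ds" "x \<in> ?Cl y"
    thus "?Cl x = ?Cl y" using C1' D'lt by simp
  next
    fix x y assume "x \<in> fst ` T ` Ds" "y \<in> fst ` T ` Ds" "?Cl x = ?Cl y"
    thus "x \<in> ?Cl y" using cyc_self[of x r1 q] D'lt by simp
  qed
  have injCl: "inj_on ?Cl (fst ` T ` Dbar)" and imCl: "?Cl ` fst ` T ` Dbar = ?Cl ` fst ` T ` Ds"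
    using complete_reps_inj[OF CR1 iff] by auto
  have SCeq: "?Cl ` fst ` T ` Ds = SC q a u"
  proof
    show "?Cl ` fst ` T ` Ds \<subseteq> SC q a u"
    proof
      fix z assume "z \<in> ?Cl ` fst ` T ` Ds"
      then obtain e where e: "e \<in> Ds" "z = ?Cl (fst (T e))" by auto
      have "z = ?Cl (e * u mod r1)" using e T1 Dsn by simp
      also have "\<dots> = ?Cl (e * u)" by (rule cyc_mod)
      moreover have "cyc q (q ^ a - 1) (e * u) \<in> SC q a u" using classD[OF q3 a1 dvdn', of e u] e(1) Ds_def by blast
      ultimately show "z \<in> SC q a u" using r1def by simp
    qed
  next
    have one: "1 \<in> Ds" and two: "2 \<in> Ds" using DbarDs assms(12,13) by auto
    have "?Cl (fst (T 1)) \<in> ?Cl ` fst ` T ` Ds" using one by blast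
    hence h1: "?Cl u \<in> ?Cl ` fst ` T ` Ds" using u_def by simp
    have h2: "?Cl (2 * u) \<in> ?Cl ` fst ` T ` Ds"
    proof -
      have "?Cl (fst (T 2)) = ?Cl (2 * u mod r1)" using T1 two Dsn by simp
      also have "\<dots> = ?Cl (2 * u)" by (rule cyc_mod)
      finally have eq: "?Cl (fst (T 2)) = ?Cl (2 * u)" .
      have "?Cl (fst (T 2)) \<in> ?Cl ` fst ` T ` Ds" using two by blast
      thus ?thesis using eq by simp
    qed
    have h3: "?Cl ((1 + q ^ k) * u) \<in> ?Cl ` fst ` T ` Ds" if k: "k \<in> {1..a div 2}" for k
    proof -
      define e where "e = (q ^ 0 + q ^ k) mod n"
      have "e = (q ^ 0 + q ^ k) mod (q ^ m - 1) \<and> 0 < k \<and> k < m"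
        using k am by (auto simp: e_def assms(4))
      hence "\<exists>i j. e = (q ^ i + q ^ j) mod (q ^ m - 1) \<and> i < j \<and> j < m" by blast
      hence "e \<in> B2 q m" unfolding B2_def by blast
      hence eD: "e \<in> Ds" unfolding Ds_def Dstar_def by simp
      have "?Cl (fst (T e)) = ?Cl (e * u mod r1)" using T1 eD Dsn by simp
      also have "\<dots> = ?Cl (e * u)" by (rule cyc_mod)
      also have "\<dots> = ?Cl ((1 + q ^ k) * u)" unfolding e_def
        using modN[OF q3 a1 dvdn'] r1def assms(4) by simp
      finally have eq: "?Cl (fst (T e)) = ?Cl ((1 + q ^ k) * u)" .
      have "?Cl (fst (T e)) \<in> ?Cl ` fst ` T ` Ds" using eD by blast
      thus ?thesis using eq by simp
    qed
    have S: "SC q a u = {?Cl u, ?Cl (2 * u)} \<union> (\<lambda>k. ?Cl ((1 + q ^ k) * u)) ` {1..a div 2}"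
      by (simp only: r1def)
    show "SC q a u \<subseteq> ?Cl ` fst ` T ` Ds" unfolding S
    proof (rule Un_least)
      show "{?Cl u, ?Cl (2 * u)} \<subseteq> ?Cl ` fst ` T ` Ds" using h1 h2 by simp
      show "(\<lambda>k. ?Cl ((1 + q ^ k) * u)) ` {1..a div 2} \<subseteq> ?Cl ` fst ` T ` Ds"
        using h3 by (rule image_subsetI)
    qed
  qed
  have cardSC: "card (SC q a u) = 2 + a div 2" using card_SC[OF q3 a1, of u w] w r1def by simp
  have modinv: "x mod r1 = y mod r1" if "x * u mod r1 = y * u mod r1" for x y
  proof -
    have inv: "z * u * w mod r1 = z mod r1" for z
    proof -
      have "z * u * w mod r1 = z * ((u * w) mod r1) mod r1" by (simp add: mod_mult_right_eq mult.assoc)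
      thus ?thesis using w by simp
    qed
    have "x mod r1 = (x * u mod r1) * w mod r1" using inv by (simp add: mod_mult_left_eq)
    also have "\<dots> = (y * u mod r1) * w mod r1" using that by simp
    also have "\<dots> = y mod r1" using inv by (simp add: mod_mult_left_eq)
    finally show ?thesis .
  qed
  have injT: "inj_on (\<lambda>e. fst (T e)) U"
  proof (rule inj_onI)
    fix x y assume xy: "x \<in> U" "y \<in> U" "fst (T x) = fst (T y)"
    have xn: "x < n" "y < n" using xy UD DbarDs Dsn by auto
    hence "x * u mod r1 = y * u mod r1" using xy T1 by simp
    hence "x mod r1 = y mod r1" by (rule modinv)
    moreover have "x \<in> Dbar" using xy UD by auto
    ultimately have "x \<in> {z \<in> Dbar. z mod r1 = y mod r1}" "x \<in> {z \<in> Dbar. z mod r1 = x mod r1}" by auto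
    thus "x = y" using CRU \<open>x \<in> Dbar\<close> xy by metis
  qed
  have imT: "(\<lambda>e. fst (T e)) ` U = fst ` T ` Dbar"
  proof
    show "(\<lambda>e. fst (T e)) ` U \<subseteq> fst ` T ` Dbar" using UD by auto
  next
    show "fst ` T ` Dbar \<subseteq> (\<lambda>e. fst (T e)) ` U"
    proof
      fix z assume "z \<in> fst ` T ` Dbar"
      then obtain x where x: "x \<in> Dbar" "z = fst (T x)" by auto
      then obtain y where y: "y \<in> U" "x mod r1 = y mod r1" using CRU by blast
      have "x < n" "y < n" using x y UD DbarDs Dsn by auto
      hence "fst (T x) = x * u mod r1" "fst (T y) = y * u mod r1" using T1 by auto
      moreover have "x * u mod r1 = y * u mod r1" using y(2) by (metis mod_mult_left_eq)
      ultimately have "fst (T x) = fst (T y)" by simp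
      thus "z \<in> (\<lambda>e. fst (T e)) ` U" using x y by auto
    qed
  qed
  let ?g = "\<lambda>e. ?Cl (fst (T e))"
  have injg: "inj_on ?g U"
  proof -
    have "inj_on ?Cl ((\<lambda>e. fst (T e)) ` U)" using injCl imT by simp
    thus ?thesis using injT comp_inj_on[OF injT] by (simp add: o_def)
  qed
  have "?g ` U = ?Cl ` ((\<lambda>e. fst (T e)) ` U)" by (simp add: image_image)
  hence img: "?g ` U = SC q a u" using imT imCl SCeq by simp
  have "U \<subseteq> {..<n}" using UD DbarDs Dsn by auto
  hence finU: "finite U" using finite_subset by blast
  have cardU: "card U = 2 + a div 2" using card_image[OF injg] img cardSC by simp
  have B2ge: "x \<ge> 4" if "x \<in> B2 q m" for x
  proof -
    have "\<exists>i j. x = (q ^ i + q ^ j) mod (q ^ m - 1) \<and> i < j \<and> j < m" using that unfolding B2_def by blast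
    then obtain i j where ij: "i < j" "j < m" "x = (q ^ i + q ^ j) mod (q ^ m - 1)" by blast
    have "q ^ i + q ^ j < q ^ m - 1" using sum_pow_lt[OF q3, of i j m] ij by simp
    hence "x = q ^ i + q ^ j" using ij by simp
    moreover have "q ^ j \<ge> q" using ij q3 power_increasing[of 1 j q] by simp
    moreover have "q ^ i \<ge> 1" using q3 by simp
    ultimately show ?thesis using q3 by linarith
  qed
  have Usub: "U \<subseteq> {1, 2} \<union> B2 q m"
  proof
    fix x assume xU: "x \<in> U"
    have xD: "x \<in> Dbar" "x \<in> Ds" using xU UD DbarDs by auto
    have xn: "x < n" using xD Dsn by simp
    have CRn': "\<forall>z\<in>Ds. \<exists>!y. y \<in> Dbar \<and> z \<in> cyc q n y" using CRn unfolding complete_reps_def by auto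
    have selfx: "x \<in> cyc q n x" using cyc_self[of x n q] xn by simp
    have "x \<in> Omega1 q m \<or> x \<in> B1 q m \<or> x \<in> B2 q m" using xD unfolding Ds_def Dstar_def by auto
    thus "x \<in> {1, 2} \<union> B2 q m"
    proof (elim disjE)
      assume "x \<in> Omega1 q m"
      then obtain i where "x = q ^ i mod n" unfolding Omega1_def assms(4) by auto
      hence c: "x \<in> cyc q n 1" unfolding cyc_def by auto
      have eu: "\<exists>!y. y \<in> Dbar \<and> x \<in> cyc q n y" using CRn' xD(2) by blast
      have "x = 1" using eu xD(1) selfx c assms(12) by blast
      thus ?thesis by simp
    next
      assume "x \<in> B1 q m"
      then obtain i where "x = 2 * q ^ i mod n" unfolding B1_def assms(4) by auto
      hence c: "x \<in> cyc q n 2" unfolding cyc_def by auto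
      have eu: "\<exists>!y. y \<in> Dbar \<and> x \<in> cyc q n y" using CRn' xD(2) by blast
      have "x = 2" using eu xD(1) selfx c assms(13) by blast
      thus ?thesis by simp
    qed simp
  qed
  have Ueq: "U = insert 1 (insert 2 (U \<inter> B2 q m))" using Usub assms(15,16) by auto
  have n12: "1 \<notin> U \<inter> B2 q m" "2 \<notin> U \<inter> B2 q m" using B2ge by fastforce+
  have "card U = 2 + card (U \<inter> B2 q m)"
    using finU n12 by (subst Ueq) simp
  moreover have "card (?g ` (U \<inter> B2 q m)) = card (U \<inter> B2 q m)"
    using card_image inj_on_subset[OF injg] by blast
  ultimately show ?thesis using cardU by simp
qed

end
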